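(* Let $N\ge2$, $R\in[0,1]$, $\alpha>0$, and set $K^*(N,p)=|\mathbb S^{N-1}|^{\frac{1-p}{p+1}}\left(\frac{2(p+1)}{p-1}\right)^{\frac{2p}{p+1}}$. Then $$\int_{\partial B}|Du_{\alpha,\mathrm{rad}}|^2d\sigma\le K^*(N,p)\frac{(C_{\alpha,\mathrm{rad}})^{2p/(p+1)}}{(\alpha+1)^{2/(p+1)}}.$$
   Context: $B=B(0,1)\subset\mathbb R^N$, $|\mathbb S^{N-1}|=2\pi^{N/2}/\Gamma(N/2)$; $p\in(1,\frac{N+2}{N-2})$ if $N\ge3$, $p>1$ if $N=2$. Weight $V=V_{R,\alpha}$: for $R\in(0,1)$, $V(r)=(1-r/R)^\alpha$ for $0\le r<R$, $\left(1-\frac{1-r}{1-R}\right)^\alpha$ for $R\le r\le1$; $V=|x|^\alpha$ if $R=0$; $V=(1-|x|)^\alpha$ if $R=1$. $S_{\alpha,\mathrm{rad}}=\inf_{0\ne u\in H^1_{0,\mathrm{rad}}(B)}\frac{\int_B|Du|^2}{(\int_BV|u|^{p+1})^{2/(p+1)}}$; $u^*_{\alpha,\mathrm{rad}}$ is a positive radial minimiser with $\int_BV|u^*_{\alpha,\mathrm{rad}}|^{p+1}=1$, and $u_{\alpha,\mathrm{rad}}=S_{\alpha,\mathrm{rad}}^{1/(p-1)}u^*_{\alpha,\mathrm{rad}}$, which solves $-\Delta u=V(|x|)u^p$ in $B$, $u=0$ on $\partial B$. $C_{\alpha,\mathrm{rad}}=I(u_{\alpha,\mathrm{rad}})$ where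 $I(u)=\frac12\int_B|Du|^2-\frac1{p+1}\int_BV|u|^{p+1}$. *)

theory Defs
  imports "HOL-Analysis.Analysis"
begin

text \<open>Radial functions on the unit ball B of R^N are represented by their
profiles v on (0,1], u(x) = v(|x|). Integrals over B of radial quantities are
written in polar coordinates: int_B f(|x|) dx = |S^{N-1}| int_0^1 f(r) r^(N-1) dr.\<close>

definition sphere_area :: "nat \<Rightarrow> real" where
  "sphere_area N = 2 * pi powr (real N / 2) / Gamma (real N / 2)"

definition Vw :: "real \<Rightarrow> real \<Rightarrow> real \<Rightarrow> real" where
  "Vw R \<alpha> r =
     (if R = 0 then r powr \<alpha>
      else if R = 1 then (1 - r) powr \<alpha>
      else if r < R then (1 - r / R) powr \<alpha>
      else (1 - (1 - r) / (1 - R)) powr \<alpha>)"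

definition rderiv :: "(real \<Rightarrow> real) \<Rightarrow> real \<Rightarrow> real" where
  "rderiv v r = vector_derivative v (at r within {0<..1})"

text \<open>Profiles of radial functions in H^1_0(B) that are C^1 on B minus the origin
(this class contains every radial minimiser and gives the same infimum).\<close>
definition rad_adm :: "nat \<Rightarrow> real \<Rightarrow> real \<Rightarrow> real \<Rightarrow> (real \<Rightarrow> real) \<Rightarrow> bool" where
  "rad_adm N R \<alpha> p v \<longleftrightarrow>
     (\<forall>r\<in>{0<..1}. v differentiable (at r within {0<..1})) \<and>
     continuous_on {0<..1} (rderiv v) \<and>
     v 1 = 0 \<and>
     set_integrable lborel {0<..<1} (\<lambda>r. (rderiv v r)\<^sup>2 * r ^ (N - 1)) \<and>
     set_integrable lborel {0<..<1} (\<lambda>r. Vw R \<alpha> r * \<bar>v r\<bar> powr (p + 1) * r ^ (N - 1))"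

definition dirichlet :: "nat \<Rightarrow> (real \<Rightarrow> real) \<Rightarrow> real" where
  "dirichlet N v = sphere_area N * (LINT r : {0<..<1} | lborel. (rderiv v r)\<^sup>2 * r ^ (N - 1))"

definition wnorm :: "nat \<Rightarrow> real \<Rightarrow> real \<Rightarrow> real \<Rightarrow> (real \<Rightarrow> real) \<Rightarrow> real" where
  "wnorm N R \<alpha> p v = sphere_area N *
     (LINT r : {0<..<1} | lborel. Vw R \<alpha> r * \<bar>v r\<bar> powr (p + 1) * r ^ (N - 1))"

definition S_rad :: "nat \<Rightarrow> real \<Rightarrow> real \<Rightarrow> real \<Rightarrow> real" where
  "S_rad N R \<alpha> p = (INF v \<in> {v. rad_adm N R \<alpha> p v \<and> (\<exists>r\<in>{0<..<1}. v r \<noteq> 0)}.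
      dirichlet N v / (wnorm N R \<alpha> p v) powr (2 / (p + 1)))"

definition energy :: "nat \<Rightarrow> real \<Rightarrow> real \<Rightarrow> real \<Rightarrow> (real \<Rightarrow> real) \<Rightarrow> real" where
  "energy N R \<alpha> p v = dirichlet N v / 2 - wnorm N R \<alpha> p v / (p + 1)"

definition Kstar :: "nat \<Rightarrow> real \<Rightarrow> real" where
  "Kstar N p = sphere_area N powr ((1 - p) / (p + 1)) *
     (2 * (p + 1) / (p - 1)) powr (2 * p / (p + 1))"

end

theory Submission
  imports Defs
begin



lemma meas_cont:
  assumes "continuous_on {0<..<1} (f::real\<Rightarrow>real)"
  shows "(\<lambda>r. if r \<in> {0<..<1::real} then f r else 0) \<in> borel_measurable borel"
proof -
  have "(\<lambda>x. indicator {0<..<1::real} x *\<^sub>R f x) \<in> borel_measurable borel"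
    by (rule borel_measurable_continuous_on_indicator) (auto simp: assms)
  moreover have "(\<lambda>x. indicator {0<..<1::real} x *\<^sub>R f x) = (\<lambda>r. if r \<in> {0<..<1::real} then f r else 0)"
    by (auto simp: indicator_def)
  ultimately show ?thesis by simp
qed

lemma setmeas_eq:
  assumes "g \<in> borel_measurable borel" "\<And>r. r \<in> {0<..<1} \<Longrightarrow> f r = g r"
  shows "set_borel_measurable lborel {0<..<1::real} (f::real\<Rightarrow>real)"
proof -
  have "(\<lambda>x. indicator {0<..<1::real} x *\<^sub>R g x) \<in> borel_measurable borel"
    using assms(1) by measurable
  moreover have "(\<lambda>x. indicator {0<..<1::real} x *\<^sub>R g x) = (\<lambda>x. indicator {0<..<1::real} x *\<^sub>R f x)"
    using assms(2) by (auto simp: indicator_def)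
  ultimately show ?thesis unfolding set_borel_measurable_def by simp
qed

lemma Vw_meas: "Vw R \<alpha> \<in> borel_measurable borel"
  unfolding Vw_def by measurable

lemma Vw_bounds:
  assumes "0 \<le> R" "R \<le> 1" "\<alpha> > 0" "r \<in> {0<..<1}"
  shows "0 \<le> Vw R \<alpha> r" "Vw R \<alpha> r \<le> 1"
proof -
  show "0 \<le> Vw R \<alpha> r" by (simp add: Vw_def)
  have "r powr \<alpha> \<le> 1" using assms by (intro powr_le1) auto
  moreover have "(1 - r) powr \<alpha> \<le> 1" using assms by (intro powr_le1) auto
  moreover have "r < R \<Longrightarrow> R \<noteq> 0 \<Longrightarrow> (1 - r / R) powr \<alpha> \<le> 1" using assms
    by (intro powr_le1) (auto simp: field_simps)
  moreover have "\<not> r < R \<Longrightarrow> R \<noteq> 1 \<Longrightarrow> (1 - (1 - r) / (1 - R)) powr \<alpha> \<le> 1" using assms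
    by (intro powr_le1) (auto simp: field_simps)
  ultimately show "Vw R \<alpha> r \<le> 1" unfolding Vw_def by auto
qed

lemma w_int: "set_integrable lborel {0<..<1::real} (\<lambda>r. c * r^k)"
proof -
  have "set_integrable lborel {0..1::real} (\<lambda>r. c * r^k)"
    by (rule borel_integrable_atLeastAtMost') (intro continuous_intros)
  then show ?thesis by (rule set_integrable_subset) auto
qed

lemma bdd_int:
  assumes "set_borel_measurable lborel {0<..<1::real} f" "\<And>r. r\<in>{0<..<1} \<Longrightarrow> \<bar>f r\<bar> \<le> c"
  shows "set_integrable lborel {0<..<1::real} (f::real\<Rightarrow>real)"
proof (rule set_integrable_bound[OF _ assms(1)])
  show "set_integrable lborel {0<..<1::real} (\<lambda>r. c * r^0)" by (rule w_int)
  show "AE x in lborel. x \<in> {0<..<1} \<longrightarrow> norm (f x) \<le> norm (c * x ^ 0)"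
    using assms(2) by (auto intro!: AE_I2) (smt (verit) assms(2))
qed



lemma ftc_pow:
  fixes c0 c1 x0 x1 \<alpha> :: real
  assumes "x0 \<le> x1" "c1 \<noteq> 0" "\<alpha> > 0"
    and nn: "\<And>r. r \<in> {x0..x1} \<Longrightarrow> 0 \<le> c0 + c1*r"
    and pos: "\<And>r. r \<in> {x0<..<x1} \<Longrightarrow> 0 < c0 + c1*r"
    and eq: "\<And>r. r \<in> {x0<..<x1} \<Longrightarrow> f r = (c0 + c1*r) powr \<alpha>"
  shows "(f has_integral ((c0+c1*x1) powr (\<alpha>+1) - (c0+c1*x0) powr (\<alpha>+1)) / (c1*(\<alpha>+1))) {x0..x1}"
proof -
  let ?F = "\<lambda>r. (c0+c1*r) powr (\<alpha>+1) / (c1*(\<alpha>+1))"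
  have "((\<lambda>r. (c0 + c1*r) powr \<alpha>) has_integral (?F x1 - ?F x0)) {x0..x1}"
  proof (rule fundamental_theorem_of_calculus_interior[OF assms(1)])
    show "continuous_on {x0..x1} ?F"
      using nn assms by (intro continuous_intros continuous_on_powr') auto
    fix x assume x: "x \<in> {x0<..<x1}"
    have b: "0 < c0 + c1*x" using pos[OF x] .
    have "((\<lambda>r. (c0+c1*r) powr (\<alpha>+1)) has_real_derivative
        (c0+c1*x) powr (\<alpha>+1) * (0 * ln (c0+c1*x) + c1 * (\<alpha>+1) / (c0+c1*x))) (at x)"
      by (rule DERIV_powr) (auto intro!: derivative_eq_intros simp: b)
    then have "(?F has_real_derivative (c0+c1*x) powr (\<alpha>+1) * (0 * ln (c0+c1*x) + c1 * (\<alpha>+1) / (c0+c1*x)) / (c1*(\<alpha>+1))) (at x)"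
      by (rule DERIV_cdivide)
    moreover have "(c0+c1*x) powr (\<alpha>+1) * (0 * ln (c0+c1*x) + c1 * (\<alpha>+1) / (c0+c1*x)) / (c1*(\<alpha>+1)) = (c0 + c1*x) powr \<alpha>"
    proof -
      have e: "(c0+c1*x) powr (\<alpha>+1) = (c0+c1*x) powr \<alpha> * (c0+c1*x)" using b by (simp add: powr_add)
      have k: "c1*(\<alpha>+1) \<noteq> 0" using assms by simp
      have g: "\<And>P b k l. b > 0 \<Longrightarrow> k \<noteq> 0 \<Longrightarrow> P*b*(0*l + k/b)/k = (P::real)" by (simp add: field_simps)
      show ?thesis unfolding e by (rule g[OF b k])
    qed
    ultimately have "(?F has_real_derivative (c0 + c1*x) powr \<alpha>) (at x)" by simp
    then show "(?F has_vector_derivative (c0 + c1*x) powr \<alpha>) (at x)"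
      by (simp add: has_real_derivative_iff_has_vector_derivative)
  qed
  then have "((\<lambda>r. (c0 + c1*r) powr \<alpha>) has_integral (?F x1 - ?F x0)) {x0<..<x1}"
    by (simp add: has_integral_Icc_iff_Ioo)
  then have "(f has_integral (?F x1 - ?F x0)) {x0<..<x1}"
    by (rule has_integral_cong[THEN iffD1, rotated]) (simp add: eq)
  then show ?thesis by (simp add: has_integral_Icc_iff_Ioo diff_divide_distrib)
qed

lemma Vw_has_integral:
  assumes "0 \<le> R" "R \<le> 1" "\<alpha> > 0"
  shows "(Vw R \<alpha> has_integral 1/(\<alpha>+1)) {0..1}"
proof -
  consider "R = 0" | "R = 1" | "0 < R \<and> R < 1" using assms by linarith
  then show ?thesis
  proof cases
    case 1
    have "(Vw R \<alpha> has_integral ((0+1*1) powr (\<alpha>+1) - (0+1*0) powr (\<alpha>+1)) / (1*(\<alpha>+1))) {0..1}"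
      by (rule ftc_pow) (use assms 1 in \<open>auto simp: Vw_def\<close>)
    then show ?thesis by simp
  next
    case 2
    have "(Vw R \<alpha> has_integral ((1+(-1)*1) powr (\<alpha>+1) - (1+(-1)*0) powr (\<alpha>+1)) / ((-1)*(\<alpha>+1))) {0..1}"
      by (rule ftc_pow) (use assms 2 in \<open>auto simp: Vw_def\<close>)
    moreover have "-(1/(-\<alpha>-1)) = 1/(\<alpha>+1)"
    proof -
      have "-\<alpha>-1 = -(\<alpha>+1)" by simp
      then show ?thesis by (simp only: divide_minus_right)
    qed
    ultimately show ?thesis by simp
  next
    case 3
    have i1: "(Vw R \<alpha> has_integral ((1+(-1/R)*R) powr (\<alpha>+1) - (1+(-1/R)*0) powr (\<alpha>+1)) / ((-1/R)*(\<alpha>+1))) {0..R}"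
    proof (rule ftc_pow)
      fix r assume "r \<in> {0..R}" then show "0 \<le> 1 + - 1 / R * r" using 3 by (auto simp: field_simps)
    next
      fix r assume "r \<in> {0<..<R}" then show "0 < 1 + - 1 / R * r" using 3 by (auto simp: field_simps)
    next
      fix r assume "r \<in> {0<..<R}" then show "Vw R \<alpha> r = (1 + - 1 / R * r) powr \<alpha>" using 3 by (auto simp: Vw_def)
    qed (use assms 3 in auto)
    have i2: "(Vw R \<alpha> has_integral ((-R/(1-R)+(1/(1-R))*1) powr (\<alpha>+1) - (-R/(1-R)+(1/(1-R))*R) powr (\<alpha>+1)) / ((1/(1-R))*(\<alpha>+1))) {R..1}"
    proof (rule ftc_pow)
      fix r assume "r \<in> {R..1}"
      moreover have "-R/(1-R) + 1/(1-R) * r = (r-R)/(1-R)" using 3 by (simp add: diff_divide_distrib)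
      ultimately show "0 \<le> -R/(1-R) + 1/(1-R) * r" using 3 by auto
    next
      fix r assume "r \<in> {R<..<1}"
      moreover have "-R/(1-R) + 1/(1-R) * r = (r-R)/(1-R)" using 3 by (simp add: diff_divide_distrib)
      ultimately show "0 < -R/(1-R) + 1/(1-R) * r" using 3 by auto
    next
      fix r assume r: "r \<in> {R<..<1}"
      have nz: "1 - R \<noteq> 0" using 3 by simp
      have "1 - (1 - r) / (1 - R) = (1-R)/(1-R) - (1-r)/(1-R)" using nz by simp
      also have "\<dots> = ((1-R)-(1-r))/(1-R)" by (simp only: diff_divide_distrib[symmetric])
      also have "\<dots> = (r-R)/(1-R)" by (simp add: algebra_simps)
      also have "\<dots> = -R/(1-R) + 1/(1-R) * r" by (simp add: diff_divide_distrib)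
      finally have "1 - (1 - r) / (1 - R) = -R/(1-R) + 1/(1-R) * r" .
      then show "Vw R \<alpha> r = (-R/(1-R) + 1/(1-R) * r) powr \<alpha>" using 3 r by (auto simp: Vw_def)
    qed (use assms 3 in auto)
    have "(Vw R \<alpha> has_integral (R/(\<alpha>+1) + (1-R)/(\<alpha>+1))) {0..1}"
    proof (rule has_integral_combine[of 0 R 1])
      show "(Vw R \<alpha> has_integral R / (\<alpha> + 1)) {0..R}" using i1 3 assms by (simp add: divide_simps)
      have "(-R/(1-R)+(1/(1-R))*1) = 1" "(-R/(1-R)+(1/(1-R))*R) = 0" using 3 by (auto simp: field_simps)
      then show "(Vw R \<alpha> has_integral (1-R) / (\<alpha> + 1)) {R..1}" using i2 3 assms by (simp add: divide_simps)
    qed (use 3 in auto)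
    then show ?thesis by (simp add: add_divide_distrib[symmetric])
  qed
qed



lemma aux_div:
  fixes p a X Z :: real
  assumes "p > 0" "a \<le> X/((p+1)/p) + Z/(p+1)"
  shows "(p+1)*a \<le> p*X + Z"
proof -
  have "X/((p+1)/p) + Z/(p+1) = (p*X + Z)/(p+1)" using assms by (simp add: divide_simps)
  then have "a \<le> (p*X + Z)/(p+1)" using assms by simp
  then show ?thesis using assms by (simp add: pos_le_divide_eq mult.commute)
qed

lemma conv_pt:
  fixes x y p :: real
  assumes "x > 0" "p > 1"
  shows "x powr (p+1) + (p+1) * x powr p * (y - x) \<le> \<bar>y\<bar> powr (p+1)"
proof -
  have Y: "x powr p * \<bar>y\<bar> \<le> (x powr p) powr ((p+1)/p) / ((p+1)/p) + \<bar>y\<bar> powr (p+1) / (p+1)"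
    by (rule Youngs_inequality) (use assms in \<open>auto simp: field_simps\<close>)
  have e1: "(x powr p) powr ((p+1)/p) = x powr (p+1)" using assms by (simp add: powr_powr)
  have e2: "x powr (p+1) = x powr p * x" using assms by (simp add: powr_add)
  have "(p+1) * (x powr p * \<bar>y\<bar>) \<le> p * x powr (p+1) + \<bar>y\<bar> powr (p+1)"
    using aux_div[OF _ Y] unfolding e1 using assms by simp
  moreover have "(p+1) * (x powr p * y) \<le> (p+1) * (x powr p * \<bar>y\<bar>)"
    using assms by (intro mult_left_mono) auto
  moreover have "x powr (p+1) + (p+1) * x powr p * (y - x) = (p+1) * (x powr p * y) - p * x powr (p+1)"
    unfolding e2 by (simp add: algebra_simps)
  ultimately show ?thesis by linarith
qed

lemma young_pt:
  fixes x p l :: real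
  assumes "x \<ge> 0" "p > 1" "l > 0"
  shows "x powr p \<le> p/(p+1) * l * x powr (p+1) + l powr (-p) / (p+1)"
proof -
  have Y: "(l powr (p/(p+1)) * x powr p) * l powr (-p/(p+1)) \<le>
     (l powr (p/(p+1)) * x powr p) powr ((p+1)/p) / ((p+1)/p) + (l powr (-p/(p+1))) powr (p+1) / (p+1)"
    by (rule Youngs_inequality) (use assms in \<open>auto simp: field_simps\<close>)
  have a: "(l powr (p/(p+1)) * x powr p) * l powr (-p/(p+1)) = x powr p"
    using assms by (simp add: powr_add[symmetric])
  have b: "(l powr (p/(p+1)) * x powr p) powr ((p+1)/p) = l * x powr (p+1)"
    using assms by (simp add: powr_mult powr_powr)
  have c: "(l powr (-p/(p+1))) powr (p+1) = l powr (-p)"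
    using assms by (simp add: powr_powr)
  show ?thesis using Y unfolding a b c using assms by (simp add: field_simps)
qed

lemma pow_le:
  fixes x p :: real
  assumes "x \<ge> 0" "p > 0"
  shows "x powr p \<le> x powr (p+1) + 1"
proof (cases "x \<le> 1")
  case True
  then have "x powr p \<le> 1" using assms by (intro powr_le1) auto
  then show ?thesis by (smt (verit) powr_ge_zero)
next
  case False
  then have "x powr p \<le> x powr (p+1)" by (intro powr_mono) auto
  then show ?thesis by simp
qed

lemma sum_pow:
  fixes a b q :: real
  assumes "q \<ge> 0"
  shows "\<bar>a + b\<bar> powr q \<le> 2 powr q * (\<bar>a\<bar> powr q + \<bar>b\<bar> powr q)"
proof -
  have "\<bar>a + b\<bar> \<le> 2 * max \<bar>a\<bar> \<bar>b\<bar>" by linarith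
  then have "\<bar>a + b\<bar> powr q \<le> (2 * max \<bar>a\<bar> \<bar>b\<bar>) powr q" by (intro powr_mono2 assms) auto
  also have "\<dots> = 2 powr q * (max \<bar>a\<bar> \<bar>b\<bar>) powr q" by (simp add: powr_mult)
  also have "(max \<bar>a\<bar> \<bar>b\<bar>) powr q \<le> \<bar>a\<bar> powr q + \<bar>b\<bar> powr q"
    by (cases "\<bar>a\<bar> \<le> \<bar>b\<bar>") (auto simp: max_def)
  finally show ?thesis by (simp add: mult_left_mono)
qed


lemma set_nonneg:
  fixes f :: "real \<Rightarrow> real"
  assumes "\<And>r. r \<in> A \<Longrightarrow> 0 \<le> f r"
  shows "0 \<le> (LINT r:A|lborel. f r)"
  unfolding set_lebesgue_integral_def
  by (rule Bochner_Integration.integral_nonneg) (use assms in \<open>auto simp: indicator_def\<close>)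

lemma Vint:
  assumes "0 \<le> R" "R \<le> 1" "\<alpha> > 0"
  shows "set_integrable lborel {0<..<1} (\<lambda>r. Vw R \<alpha> r * r^k)"
    and "(LINT r:{0<..<1}|lborel. Vw R \<alpha> r * r^k) \<le> 1/(\<alpha>+1)"
proof -
  have m: "(\<lambda>r. Vw R \<alpha> r * r^k) \<in> borel_measurable borel" using Vw_meas by measurable
  show i: "set_integrable lborel {0<..<1} (\<lambda>r. Vw R \<alpha> r * r^k)"
  proof (rule bdd_int[where c=1])
    show "set_borel_measurable lborel {0<..<1} (\<lambda>r. Vw R \<alpha> r * r ^ k)"
      by (rule setmeas_eq[OF m]) simp
    fix r :: real assume r: "r \<in> {0<..<1}"
    then have "r^k \<le> 1" by (simp add: power_le_one)
    then show "\<bar>Vw R \<alpha> r * r ^ k\<bar> \<le> 1" using Vw_bounds[OF assms r] r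
      by (simp add: abs_mult) (metis mult_le_one zero_le_power less_eq_real_def)
  qed
  have i0: "set_integrable lborel {0<..<1} (\<lambda>r. Vw R \<alpha> r)"
  proof (rule bdd_int[where c=1])
    show "set_borel_measurable lborel {0<..<1} (\<lambda>r. Vw R \<alpha> r)"
      by (rule setmeas_eq[OF Vw_meas]) simp
    fix r :: real assume r: "r \<in> {0<..<1}"
    then show "\<bar>Vw R \<alpha> r\<bar> \<le> 1" using Vw_bounds[OF assms r] by simp
  qed
  have "(LINT r:{0<..<1}|lborel. Vw R \<alpha> r * r^k) \<le> (LINT r:{0<..<1}|lborel. Vw R \<alpha> r)"
  proof (rule set_integral_mono[OF i i0])
    fix r :: real assume r: "r \<in> {0<..<1}"
    then have "r^k \<le> 1" by (simp add: power_le_one)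
    then show "Vw R \<alpha> r * r^k \<le> Vw R \<alpha> r" using Vw_bounds[OF assms r]
      by (simp add: mult_left_le)
  qed
  also have "\<dots> = integral {0<..<1} (Vw R \<alpha>)" by (rule set_borel_integral_eq_integral(2)[OF i0])
  also have "\<dots> = integral {0..1} (Vw R \<alpha>)" by (simp add: integral_open_interval_real)
  also have "\<dots> = 1/(\<alpha>+1)" using Vw_has_integral[OF assms] by (rule integral_unique)
  finally show "(LINT r:{0<..<1}|lborel. Vw R \<alpha> r * r^k) \<le> 1/(\<alpha>+1)" .
qed



definition phi :: "real \<Rightarrow> real \<Rightarrow> real" where
  "phi a r = (if r \<le> a then 1 else 1 - 3*((r-a)/(1-a))^2 + 2*((r-a)/(1-a))^3)"

definition phid :: "real \<Rightarrow> real \<Rightarrow> real" where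
  "phid a r = (if r \<le> a then 0 else 6*(((r-a)/(1-a))^2 - (r-a)/(1-a))/(1-a))"

lemma phi_deriv:
  assumes "a < 1"
  shows "(phi a has_real_derivative phid a x) (at x)"
proof -
  let ?g = "\<lambda>r. 1 - 3*((r-a)/(1-a))^2 + 2*((r-a)/(1-a))^3"
  let ?g' = "\<lambda>r. 6*(((r-a)/(1-a))^2 - (r-a)/(1-a))/(1-a)"
  have gd: "(?g has_vector_derivative ?g' y) (at y within X)" for y X
  proof -
    have s: "((\<lambda>r. (r-a)/(1-a)) has_real_derivative 1/(1-a)) (at y within X)"
      using assms by (auto intro!: derivative_eq_intros)
    have P: "((\<lambda>z. 1 - 3*z^2 + 2*z^3) has_real_derivative (-6*z0 + 6*z0^2)) (at z0)" for z0::real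
      by (auto intro!: derivative_eq_intros simp: power2_eq_square)
    have "(?g has_real_derivative (-6*((y-a)/(1-a)) + 6*((y-a)/(1-a))^2) * (1/(1-a))) (at y within X)"
      by (rule DERIV_chain2[OF P s])
    moreover have "(-6*((y-a)/(1-a)) + 6*((y-a)/(1-a))^2) * (1/(1-a)) = ?g' y"
    proof -
      have g: "(-6*z + 6*z^2)*(1/c) = 6*(z^2 - z)/c" for z c :: real
        by (cases "c=0") (simp_all add: field_simps)
      show ?thesis by (rule g)
    qed
    ultimately have "(?g has_real_derivative ?g' y) (at y within X)" by (simp only:)
    then show ?thesis by (simp add: has_real_derivative_iff_has_vector_derivative)
  qed
  have e1: "phi a = (\<lambda>x. if x \<in> {..a} then 1 else ?g x)" by (auto simp: phi_def)
  have e2: "phid a x = (if x \<in> {..a} then 0 else ?g' x)" by (auto simp: phid_def)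
  have "((\<lambda>x. if x \<in> {..a} then 1 else ?g x) has_vector_derivative (if x \<in> {..a} then 0 else ?g' x))
     (at x within UNIV)"
  proof (rule has_vector_derivative_If_within_closures[where T="{a<..}"])
    show "x \<in> {..a} \<union> {a<..}" by auto
    show "UNIV = {..a} \<union> {a<..}" by auto
  qed (use assms gd in auto)
  then show ?thesis unfolding e1 e2 by (simp add: has_real_derivative_iff_has_vector_derivative)
qed

lemma phid_cont:
  assumes "a < 1"
  shows "continuous_on UNIV (phid a)"
proof -
  have "continuous_on ({..a} \<union> {a..}) (\<lambda>r. if r \<le> a then 0 else 6*(((r-a)/(1-a))^2 - (r-a)/(1-a))/(1-a))"
    by (rule continuous_on_cases) (use assms in \<open>auto intro!: continuous_intros\<close>)
  moreover have "{..a} \<union> {a..} = UNIV" by auto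
  ultimately show ?thesis unfolding phid_def[abs_def] by simp
qed

lemma phi_props:
  assumes "0 \<le> a" "a < 1"
  shows "phi a 1 = 0" "phi a 0 = 1"
    and "\<And>r. r \<le> 1 \<Longrightarrow> 0 \<le> phi a r \<and> phi a r \<le> 1"
    and "\<And>r. r \<le> 1 \<Longrightarrow> phid a r \<le> 0"
    and "\<And>r. r \<le> a \<Longrightarrow> phid a r = 0"
proof -
  show "phi a 1 = 0" using assms by (simp add: phi_def)
  show "phi a 0 = 1" using assms by (simp add: phi_def)
  show "phid a r = 0" if "r \<le> a" for r using that by (simp add: phid_def)
  fix r :: real assume r: "r \<le> 1"
  show "0 \<le> phi a r \<and> phi a r \<le> 1"
  proof (cases "r \<le> a")
    case False
    define z where "z = (r-a)/(1-a)"
    have s: "0 \<le> z" "z \<le> 1" using False r assms by (auto simp: z_def field_simps)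
    have "1 - 3*z^2 + 2*z^3 = (1-z)^2*(1+2*z)" by (simp add: algebra_simps power2_eq_square power3_eq_cube)
    moreover have "(1-z)^2*(1+2*z) \<ge> 0" using s by simp
    moreover have "1 - 3*z^2 + 2*z^3 \<le> 1"
    proof -
      have "z^3 \<le> z^2" using s by (simp add: power_decreasing)
      then show ?thesis using s by (smt (verit) zero_le_power2)
    qed
    ultimately show ?thesis using False by (simp add: phi_def z_def)
  qed (simp add: phi_def)
  show "phid a r \<le> 0"
  proof (cases "r \<le> a")
    case False
    define z where "z = (r-a)/(1-a)"
    have s: "0 \<le> z" "z \<le> 1" using False r assms by (auto simp: z_def field_simps)
    have "z^2 - z \<le> 0" using s by (simp add: power2_eq_square mult_left_le)
    then have "6*(z^2 - z)/(1-a) \<le> 0" using assms by (simp add: divide_nonpos_pos)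
    then show ?thesis using False by (simp add: phid_def z_def)
  qed (simp add: phid_def)
qed

lemma phid_int:
  assumes "0 \<le> a" "a < 1"
  shows "set_integrable lborel {0<..<1} (phid a)" "(LINT r:{0<..<1}|lborel. phid a r) = -1"
proof -
  have c: "continuous_on {0..1} (phid a)" using phid_cont[OF assms(2)] by (rule continuous_on_subset) auto
  have "set_integrable lborel {0..1} (phid a)" by (rule borel_integrable_atLeastAtMost'[OF c])
  then show i: "set_integrable lborel {0<..<1} (phid a)" by (rule set_integrable_subset) auto
  have "(phid a has_integral (phi a 1 - phi a 0)) {0..1}"
  proof (rule fundamental_theorem_of_calculus)
    fix x assume "x \<in> {0..(1::real)}"
    show "(phi a has_vector_derivative phid a x) (at x within {0..1})"
      using phi_deriv[OF assms(2)] by (simp add: has_real_derivative_iff_has_vector_derivative has_vector_derivative_at_within)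
  qed simp
  then have "integral {0..1} (phid a) = -1" using phi_props[OF assms] by (simp add: integral_unique)
  then show "(LINT r:{0<..<1}|lborel. phid a r) = -1"
    using set_borel_integral_eq_integral(2)[OF i] by (simp add: integral_open_interval_real)
qed



lemma abs_le_sq1: "\<bar>x::real\<bar> \<le> x^2 + 1"
proof -
  have "0 \<le> (\<bar>x\<bar> - 1)^2" by simp
  also have "(\<bar>x\<bar> - 1)^2 = x^2 - 2*\<bar>x\<bar> + 1" by (simp add: power2_eq_square algebra_simps)
  finally show ?thesis by (smt (verit) zero_le_power2)
qed

lemma sphere_pos: "N \<ge> 1 \<Longrightarrow> sphere_area N > 0"
  unfolding sphere_area_def by (intro divide_pos_pos Gamma_real_pos) auto

lemma EL:
  fixes N :: nat and p R \<alpha> :: real and u ph phd :: "real \<Rightarrow> real"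
  assumes N: "N \<ge> 2" and p: "p > 1" and R: "0 \<le> R" "R \<le> 1" and al: "\<alpha> > 0"
    and adm: "rad_adm N R \<alpha> p u" and upos: "\<forall>r\<in>{0<..<1}. u r > 0"
    and wn: "wnorm N R \<alpha> p u = 1" and dS: "dirichlet N u = S_rad N R \<alpha> p"
    and phD: "\<And>x. (ph has_real_derivative phd x) (at x)" and phc: "continuous_on UNIV phd"
    and ph1: "ph 1 = 0" and phb: "\<And>r. r \<in> {0..1} \<Longrightarrow> 0 \<le> ph r \<and> ph r \<le> 1"
  shows "set_integrable lborel {0<..<1} (\<lambda>r. rderiv u r * phd r * r^(N-1))"
    "set_integrable lborel {0<..<1} (\<lambda>r. Vw R \<alpha> r * u r powr p * ph r * r^(N-1))"
    "(LINT r:{0<..<1}|lborel. rderiv u r * phd r * r^(N-1)) =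
       S_rad N R \<alpha> p * (LINT r:{0<..<1}|lborel. Vw R \<alpha> r * u r powr p * ph r * r^(N-1))"
    "set_integrable lborel {0<..<1} (\<lambda>r. Vw R \<alpha> r * u r powr p * r^(N-1))"
proof -
  define \<sigma> where "\<sigma> = sphere_area N"
  define S where "S = S_rad N R \<alpha> p"
  define ud where "ud = rderiv u"
  have \<sigma>: "\<sigma> > 0" unfolding \<sigma>_def using N by (intro sphere_pos) auto
  have diff: "\<forall>r\<in>{0<..1}. u differentiable (at r within {0<..1})"
    and cud: "continuous_on {0<..1} ud" and u1: "u 1 = 0"
    and I1: "set_integrable lborel {0<..<1} (\<lambda>r. (ud r)\<^sup>2 * r ^ (N - 1))"
    and I2: "set_integrable lborel {0<..<1} (\<lambda>r. Vw R \<alpha> r * \<bar>u r\<bar> powr (p + 1) * r ^ (N - 1))"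
    using adm unfolding rad_adm_def ud_def by auto
  have hvd: "(u has_vector_derivative ud r) (at r within {0<..1})" if "r \<in> {0<..1}" for r
    using diff that unfolding ud_def rderiv_def by (simp add: vector_derivative_works)
  have nbot: "at r within {0<..1} \<noteq> bot" if "r \<in> {0<..1}" for r :: real
  proof -
    have "r islimpt {0<..1::real}" using that by simp
    then show ?thesis using trivial_limit_within[of r "{0<..1::real}"] by (simp add: trivial_limit_def)
  qed
  have ucont: "continuous_on {0<..1} u"
    using diff by (simp add: continuous_on_eq_continuous_within differentiable_imp_continuous_within)
  define um where "um = (\<lambda>r. if r \<in> {0<..<1::real} then u r else 0)"
  define udm where "udm = (\<lambda>r. if r \<in> {0<..<1::real} then ud r else 0)"
  have um: "um \<in> borel_measurable borel" unfolding um_def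
    by (rule meas_cont) (rule continuous_on_subset[OF ucont], auto)
  have udm: "udm \<in> borel_measurable borel" unfolding udm_def
    by (rule meas_cont) (rule continuous_on_subset[OF cud], auto)
  have phcont: "continuous_on UNIV ph"
    by (rule continuous_at_imp_continuous_on) (use phD DERIV_isCont in blast)
  have phm: "ph \<in> borel_measurable borel" by (rule borel_measurable_continuous_onI[OF phcont])
  have phdm: "phd \<in> borel_measurable borel" by (rule borel_measurable_continuous_onI[OF phc])
  have Vm: "Vw R \<alpha> \<in> borel_measurable borel" by (rule Vw_meas)
  note [measurable] = um udm phm phdm Vm
  have V01: "0 \<le> Vw R \<alpha> r" "Vw R \<alpha> r \<le> 1" if "r \<in> {0<..<1}" for r
    using Vw_bounds[OF R al that] by auto
  have w01: "0 \<le> r^(N-1)" "r^(N-1) \<le> 1" if "r \<in> {0<..<1}" for r :: real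
    using that by (auto simp: power_le_one)
  have Iw: "set_integrable lborel {0<..<1::real} (\<lambda>r. 1 * r^(N-1))" by (rule w_int)
  obtain K where K: "\<And>r. r \<in> {0..1} \<Longrightarrow> \<bar>phd r\<bar> \<le> K"
  proof -
    have "compact (phd ` {0..1})"
      by (rule compact_continuous_image) (use phc continuous_on_subset in auto)
    then have "bounded (phd ` {0..1})" by (rule compact_imp_bounded)
    then obtain K where "\<forall>x\<in>phd ` {0..1}. norm x \<le> K" by (auto simp: bounded_iff)
    then have "\<forall>r\<in>{0..1}. \<bar>phd r\<bar> \<le> K" by auto
    then show ?thesis by (intro that) auto
  qed
  have K0: "K \<ge> 0" using K[of 0] by auto
  have I3: "set_integrable lborel {0<..<1} (\<lambda>r. ud r * phd r * r^(N-1))"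
  proof (rule set_integrable_bound[where f="\<lambda>r. K * ((ud r)\<^sup>2 * r ^ (N - 1)) + K * (1 * r^(N-1))"])
    show "set_integrable lborel {0<..<1} (\<lambda>r. K * ((ud r)\<^sup>2 * r ^ (N - 1)) + K * (1 * r^(N-1)))"
      using I1 Iw by auto
    show "set_borel_measurable lborel {0<..<1} (\<lambda>r. ud r * phd r * r^(N-1))"
      by (rule setmeas_eq[where g="\<lambda>r. udm r * phd r * r^(N-1)"]) (measurable, simp add: udm_def)
    show "AE x in lborel. x \<in> {0<..<1} \<longrightarrow> norm (ud x * phd x * x^(N-1)) \<le> norm (K * ((ud x)\<^sup>2 * x ^ (N - 1)) + K * (1 * x^(N-1)))"
    proof (intro AE_I2 impI)
      fix x :: real assume x: "x \<in> {0<..<1}"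
      have "\<bar>ud x * phd x * x^(N-1)\<bar> = \<bar>ud x\<bar> * \<bar>phd x\<bar> * x^(N-1)" using x by (simp add: abs_mult)
      also have "\<dots> \<le> ((ud x)\<^sup>2 + 1) * K * x^(N-1)"
        using x K[of x] abs_le_sq1[of "ud x"] K0 by (intro mult_right_mono mult_mono) auto
      also have "\<dots> = \<bar>K * ((ud x)\<^sup>2 * x ^ (N - 1)) + K * (1 * x^(N-1))\<bar>"
        using x K0 by (simp add: algebra_simps)
      finally show "norm (ud x * phd x * x^(N-1)) \<le> norm (K * ((ud x)\<^sup>2 * x ^ (N - 1)) + K * (1 * x^(N-1)))"
        by simp
    qed
  qed
  have I4: "set_integrable lborel {0<..<1::real} (\<lambda>r. (phd r)\<^sup>2 * r^(N-1))"
  proof (rule bdd_int[where c="K^2"])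
    show "set_borel_measurable lborel {0<..<1::real} (\<lambda>r. (phd r)\<^sup>2 * r ^ (N - 1))"
    proof (rule setmeas_eq[where g="\<lambda>r. (phd r)\<^sup>2 * r^(N-1)"])
      show "(\<lambda>r. (phd r)\<^sup>2 * r^(N-1)) \<in> borel_measurable borel" by measurable
    qed simp
    fix r :: real assume r: "r \<in> {0<..<1}"
    have "(phd r)\<^sup>2 \<le> K^2" using power_mono[OF K[of r] abs_ge_zero, of 2] r by simp
    then show "\<bar>(phd r)\<^sup>2 * r ^ (N - 1)\<bar> \<le> K^2"
      using w01[OF r] by (simp add: abs_mult) (metis mult_left_le order_trans zero_le_power2)
  qed
  have I5: "set_integrable lborel {0<..<1} (\<lambda>r. Vw R \<alpha> r * u r powr p * ph r * r^(N-1))"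
  proof (rule set_integrable_bound[where f="\<lambda>r. Vw R \<alpha> r * \<bar>u r\<bar> powr (p + 1) * r ^ (N - 1) + 1 * r^(N-1)"])
    show "set_integrable lborel {0<..<1} (\<lambda>r. Vw R \<alpha> r * \<bar>u r\<bar> powr (p + 1) * r ^ (N - 1) + 1 * r^(N-1))"
      using I2 Iw by auto
    show "set_borel_measurable lborel {0<..<1} (\<lambda>r. Vw R \<alpha> r * u r powr p * ph r * r^(N-1))"
      by (rule setmeas_eq[where g="\<lambda>r. Vw R \<alpha> r * um r powr p * ph r * r^(N-1)"]) (measurable, simp add: um_def)
    show "AE x in lborel. x \<in> {0<..<1} \<longrightarrow> norm (Vw R \<alpha> x * u x powr p * ph x * x^(N-1)) \<le> norm (Vw R \<alpha> x * \<bar>u x\<bar> powr (p + 1) * x ^ (N - 1) + 1 * x^(N-1))"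
    proof (intro AE_I2 impI)
      fix x :: real assume x: "x \<in> {0<..<1}"
      have ux: "u x > 0" using upos x by auto
      have phx: "0 \<le> ph x" "ph x \<le> 1" using phb[of x] x by auto
      have "\<bar>Vw R \<alpha> x * u x powr p * ph x * x^(N-1)\<bar> = Vw R \<alpha> x * u x powr p * ph x * x^(N-1)"
        using V01[OF x] w01[OF x] phx by simp
      also have "\<dots> \<le> Vw R \<alpha> x * (u x powr (p+1) + 1) * 1 * x^(N-1)"
        using V01[OF x] w01[OF x] phx pow_le[of "u x" p] ux p
        by (intro mult_right_mono mult_left_mono mult_mono) auto
      also have "\<dots> \<le> Vw R \<alpha> x * \<bar>u x\<bar> powr (p + 1) * x ^ (N - 1) + 1 * x^(N-1)"
        using V01[OF x] w01[OF x] ux mult_left_le_one_le[of "x^(N-1)" "Vw R \<alpha> x"] by (simp add: algebra_simps)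
      finally show "norm (Vw R \<alpha> x * u x powr p * ph x * x^(N-1)) \<le> norm (Vw R \<alpha> x * \<bar>u x\<bar> powr (p + 1) * x ^ (N - 1) + 1 * x^(N-1))"
        using V01[OF x] w01[OF x] by simp
    qed
  qed
  have I5b: "set_integrable lborel {0<..<1} (\<lambda>r. Vw R \<alpha> r * u r powr p * r^(N-1))"
  proof (rule set_integrable_bound[where f="\<lambda>r. Vw R \<alpha> r * \<bar>u r\<bar> powr (p + 1) * r ^ (N - 1) + 1 * r^(N-1)"])
    show "set_integrable lborel {0<..<1} (\<lambda>r. Vw R \<alpha> r * \<bar>u r\<bar> powr (p + 1) * r ^ (N - 1) + 1 * r^(N-1))"
      using I2 Iw by auto
    show "set_borel_measurable lborel {0<..<1} (\<lambda>r. Vw R \<alpha> r * u r powr p * r^(N-1))"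
      by (rule setmeas_eq[where g="\<lambda>r. Vw R \<alpha> r * um r powr p * r^(N-1)"]) (measurable, simp add: um_def)
    show "AE x in lborel. x \<in> {0<..<1} \<longrightarrow> norm (Vw R \<alpha> x * u x powr p * x^(N-1)) \<le> norm (Vw R \<alpha> x * \<bar>u x\<bar> powr (p + 1) * x ^ (N - 1) + 1 * x^(N-1))"
    proof (intro AE_I2 impI)
      fix x :: real assume x: "x \<in> {0<..<1}"
      have ux: "u x > 0" using upos x by auto
      have phx: "0 \<le> ph x" "ph x \<le> 1" using phb[of x] x by auto
      have "\<bar>Vw R \<alpha> x * u x powr p * x^(N-1)\<bar> = Vw R \<alpha> x * u x powr p * x^(N-1)"
        using V01[OF x] w01[OF x] by simp
      also have "\<dots> \<le> Vw R \<alpha> x * (u x powr (p+1) + 1) * 1 * x^(N-1)"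
        using V01[OF x] w01[OF x] pow_le[of "u x" p] ux p
        by (simp add: mult_right_mono mult_left_mono)
      also have "\<dots> \<le> Vw R \<alpha> x * \<bar>u x\<bar> powr (p + 1) * x ^ (N - 1) + 1 * x^(N-1)"
        using V01[OF x] w01[OF x] ux mult_left_le_one_le[of "x^(N-1)" "Vw R \<alpha> x"] by (simp add: algebra_simps)
      finally show "norm (Vw R \<alpha> x * u x powr p * x^(N-1)) \<le> norm (Vw R \<alpha> x * \<bar>u x\<bar> powr (p + 1) * x ^ (N - 1) + 1 * x^(N-1))"
        using V01[OF x] w01[OF x] by simp
    qed
  qed
  show "set_integrable lborel {0<..<1} (\<lambda>r. Vw R \<alpha> r * u r powr p * r^(N-1))" by (rule I5b)
  show "set_integrable lborel {0<..<1} (\<lambda>r. rderiv u r * phd r * r^(N-1))" using I3 by (simp add: ud_def)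
  show "set_integrable lborel {0<..<1} (\<lambda>r. Vw R \<alpha> r * u r powr p * ph r * r^(N-1))" by (rule I5)

  define D0 where "D0 = (LINT r:{0<..<1}|lborel. (ud r)\<^sup>2 * r^(N-1))"
  define A where "A = (LINT r:{0<..<1}|lborel. ud r * phd r * r^(N-1))"
  define B where "B = (LINT r:{0<..<1}|lborel. (phd r)\<^sup>2 * r^(N-1))"
  define C where "C = (LINT r:{0<..<1}|lborel. Vw R \<alpha> r * u r powr p * ph r * r^(N-1))"
  define W0 where "W0 = (LINT r:{0<..<1}|lborel. Vw R \<alpha> r * \<bar>u r\<bar> powr (p + 1) * r ^ (N - 1))"
  have dD0: "dirichlet N u = \<sigma> * D0" by (simp add: dirichlet_def \<sigma>_def D0_def ud_def)
  have W0: "\<sigma> * W0 = 1" using wn by (simp add: wnorm_def \<sigma>_def W0_def)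
  have Dnn: "dirichlet N v \<ge> 0" for v
    unfolding dirichlet_def using sphere_pos[of N] N by (intro mult_nonneg_nonneg set_nonneg) auto
  have S0: "S \<ge> 0" using Dnn[of u] dS by (simp add: S_def)
  define v where "v t = (\<lambda>r. u r + t * ph r)" for t
  have hv: "(v t has_vector_derivative ud r + t * phd r) (at r within {0<..1})" if r: "r \<in> {0<..1}" for t r
  proof -
    have "((\<lambda>r. t * ph r) has_real_derivative t * phd r) (at r within {0<..1})"
      by (rule DERIV_cmult, rule has_field_derivative_at_within, rule phD)
    then have "((\<lambda>r. t * ph r) has_vector_derivative t * phd r) (at r within {0<..1})"
      by (simp add: has_real_derivative_iff_has_vector_derivative)
    then show ?thesis unfolding v_def by (rule has_vector_derivative_add[OF hvd[OF r]])
  qed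
  have rdv: "rderiv (v t) r = ud r + t * phd r" if r: "r \<in> {0<..1}" for t r
    unfolding rderiv_def by (rule vector_derivative_within[OF nbot[OF r] hv[OF r]])
  have eqD: "(rderiv (v t) r)\<^sup>2 * r^(N-1) = (ud r)\<^sup>2 * r^(N-1) + (2*t) * (ud r * phd r * r^(N-1)) + t^2 * ((phd r)\<^sup>2 * r^(N-1))"
    if r: "r \<in> {0<..<1}" for t r
  proof -
    have "rderiv (v t) r = ud r + t * phd r" using r by (intro rdv) auto
    then show ?thesis by (simp add: power2_eq_square algebra_simps)
  qed
  have fi: "set_integrable lborel {0<..<1::real} (\<lambda>r. (ud r)\<^sup>2 * r^(N-1) + (2*t) * (ud r * phd r * r^(N-1)) + t^2 * ((phd r)\<^sup>2 * r^(N-1)))" for t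
    using I1 I3 I4 by (intro set_integral_add(1) set_integrable_mult_right)
  have Id: "set_integrable lborel {0<..<1::real} (\<lambda>r. (rderiv (v t) r)\<^sup>2 * r^(N-1))" for t
  proof -
    have "set_integrable lborel {0<..<1::real} (\<lambda>r. (rderiv (v t) r)\<^sup>2 * r^(N-1)) =
          set_integrable lborel {0<..<1::real} (\<lambda>r. (ud r)\<^sup>2 * r^(N-1) + (2*t) * (ud r * phd r * r^(N-1)) + t^2 * ((phd r)\<^sup>2 * r^(N-1)))"
      by (rule set_integrable_cong[OF refl refl eqD])
    then show ?thesis using fi by simp
  qed
  have Dv: "dirichlet N (v t) = \<sigma> * (D0 + 2*t*A + t^2*B)" for t
  proof -
    have "(LINT r:{0<..<1}|lborel. (rderiv (v t) r)\<^sup>2 * r^(N-1)) =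
          (LINT r:{0<..<1}|lborel. (ud r)\<^sup>2 * r^(N-1) + (2*t) * (ud r * phd r * r^(N-1)) + t^2 * ((phd r)\<^sup>2 * r^(N-1)))"
      by (rule set_lebesgue_integral_cong) (simp, (intro allI impI, rule eqD, assumption))
    also have "\<dots> = (LINT r:{0<..<1}|lborel. (ud r)\<^sup>2 * r^(N-1) + (2*t) * (ud r * phd r * r^(N-1))) + (LINT r:{0<..<1}|lborel. t^2 * ((phd r)\<^sup>2 * r^(N-1)))"
      using I1 I3 I4 by (intro set_integral_add(2)) auto
    also have "\<dots> = D0 + 2*t*A + t^2*B"
      using I1 I3 I4 by (simp add: set_integral_add(2) D0_def A_def B_def)
    finally show ?thesis by (simp add: dirichlet_def \<sigma>_def)
  qed

  have Iv: "set_integrable lborel {0<..<1::real} (\<lambda>r. Vw R \<alpha> r * \<bar>v t r\<bar> powr (p+1) * r^(N-1))" for t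
  proof (rule set_integrable_bound[where f="\<lambda>r. 2 powr (p+1) * (Vw R \<alpha> r * \<bar>u r\<bar> powr (p + 1) * r ^ (N - 1)) + (2 powr (p+1) * \<bar>t\<bar> powr (p+1)) * (1 * r^(N-1))"])
    show "set_integrable lborel {0<..<1::real} (\<lambda>r. 2 powr (p+1) * (Vw R \<alpha> r * \<bar>u r\<bar> powr (p + 1) * r ^ (N - 1)) + (2 powr (p+1) * \<bar>t\<bar> powr (p+1)) * (1 * r^(N-1)))"
      by (rule set_integral_add(1)) (rule set_integrable_mult_right, rule I2, rule set_integrable_mult_right, rule Iw)
    show "set_borel_measurable lborel {0<..<1::real} (\<lambda>r. Vw R \<alpha> r * \<bar>v t r\<bar> powr (p+1) * r^(N-1))"
    proof (rule setmeas_eq[where g="\<lambda>r. Vw R \<alpha> r * \<bar>um r + t * ph r\<bar> powr (p+1) * r^(N-1)"])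
      show "(\<lambda>r. Vw R \<alpha> r * \<bar>um r + t * ph r\<bar> powr (p+1) * r^(N-1)) \<in> borel_measurable borel" by measurable
    qed (simp add: um_def v_def)
    show "AE x in lborel. x \<in> {0<..<1} \<longrightarrow> norm (Vw R \<alpha> x * \<bar>v t x\<bar> powr (p+1) * x^(N-1)) \<le> norm (2 powr (p+1) * (Vw R \<alpha> x * \<bar>u x\<bar> powr (p + 1) * x ^ (N - 1)) + (2 powr (p+1) * \<bar>t\<bar> powr (p+1)) * (1 * x^(N-1)))"
    proof (intro AE_I2 impI)
      fix x :: real assume x: "x \<in> {0<..<1}"
      define a where "a = Vw R \<alpha> x"
      define b where "b = \<bar>v t x\<bar> powr (p+1)"
      define c where "c = \<bar>u x\<bar> powr (p+1)"
      define d where "d = \<bar>t\<bar> powr (p+1)"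
      define w where "w = x^(N-1)"
      define P where "P = (2::real) powr (p+1)"
      have a: "0 \<le> a" "a \<le> 1" using V01[OF x] by (auto simp: a_def)
      have w: "0 \<le> w" using w01[OF x] by (simp add: w_def)
      have "b \<le> P * (c + \<bar>t * ph x\<bar> powr (p+1))"
        unfolding b_def P_def c_def v_def using p by (intro sum_pow) auto
      moreover have "\<bar>t * ph x\<bar> powr (p+1) \<le> d"
      proof -
        have "\<bar>t * ph x\<bar> \<le> \<bar>t\<bar>" using phb[of x] x by (auto simp: abs_mult intro: mult_left_le)
        then show ?thesis unfolding d_def using p by (intro powr_mono2) auto
      qed
      moreover have "P \<ge> 0" "c \<ge> 0" "d \<ge> 0" "b \<ge> 0" by (auto simp: P_def c_def d_def b_def)
      ultimately have b: "b \<le> P * (c + d)" by (smt (verit) mult_left_mono)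
      have "a * b * w \<le> a * (P * (c + d)) * w" using a w b by (intro mult_right_mono mult_left_mono) auto
      also have "\<dots> = P * (a * c * w) + P * d * (a * w)" by (simp add: algebra_simps)
      also have "\<dots> \<le> P * (a * c * w) + P * d * (1 * w)"
        using a w \<open>P \<ge> 0\<close> \<open>d \<ge> 0\<close> by (intro add_left_mono mult_left_mono mult_right_mono) auto
      finally have "a * b * w \<le> P * (a * c * w) + P * d * (1 * w)" .
      moreover have "a * b * w \<ge> 0" using a w \<open>b \<ge> 0\<close> by simp
      ultimately show "norm (Vw R \<alpha> x * \<bar>v t x\<bar> powr (p+1) * x^(N-1)) \<le> norm (2 powr (p+1) * (Vw R \<alpha> x * \<bar>u x\<bar> powr (p + 1) * x ^ (N - 1)) + (2 powr (p+1) * \<bar>t\<bar> powr (p+1)) * (1 * x^(N-1)))"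
        unfolding a_def b_def c_def d_def w_def P_def by simp
    qed
  qed
  have Wv: "wnorm N R \<alpha> p (v t) \<ge> 1 + (p+1)*t*\<sigma>*C" for t
  proof -
    have int2: "set_integrable lborel {0<..<1::real} (\<lambda>r. Vw R \<alpha> r * \<bar>u r\<bar> powr (p + 1) * r ^ (N - 1) + ((p+1)*t) * (Vw R \<alpha> r * u r powr p * ph r * r^(N-1)))"
      by (rule set_integral_add(1)) (rule I2, rule set_integrable_mult_right, rule I5)
    have "(LINT r:{0<..<1}|lborel. Vw R \<alpha> r * \<bar>u r\<bar> powr (p + 1) * r ^ (N - 1) + ((p+1)*t) * (Vw R \<alpha> r * u r powr p * ph r * r^(N-1)))
        \<le> (LINT r:{0<..<1}|lborel. Vw R \<alpha> r * \<bar>v t r\<bar> powr (p+1) * r^(N-1))"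
    proof (rule set_integral_mono[OF int2 Iv])
      fix x :: real assume x: "x \<in> {0<..<1}"
      have ux: "u x > 0" using upos x by auto
      have cv: "u x powr (p+1) + (p+1) * u x powr p * (v t x - u x) \<le> \<bar>v t x\<bar> powr (p+1)"
        by (rule conv_pt[OF ux p])
      have "Vw R \<alpha> x * x^(N-1) \<ge> 0" using V01[OF x] w01[OF x] by simp
      then have "(Vw R \<alpha> x * x^(N-1)) * (u x powr (p+1) + (p+1) * u x powr p * (v t x - u x)) \<le> (Vw R \<alpha> x * x^(N-1)) * \<bar>v t x\<bar> powr (p+1)"
        by (rule mult_left_mono[OF cv])
      then show "Vw R \<alpha> x * \<bar>u x\<bar> powr (p + 1) * x ^ (N - 1) + ((p+1)*t) * (Vw R \<alpha> x * u x powr p * ph x * x^(N-1))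
          \<le> Vw R \<alpha> x * \<bar>v t x\<bar> powr (p+1) * x^(N-1)"
        using ux by (simp add: v_def algebra_simps)
    qed
    moreover have "(LINT r:{0<..<1}|lborel. Vw R \<alpha> r * \<bar>u r\<bar> powr (p + 1) * r ^ (N - 1) + ((p+1)*t) * (Vw R \<alpha> r * u r powr p * ph r * r^(N-1)))
        = W0 + (p+1)*t*C"
      using I2 I5 by (simp add: set_integral_add(2) W0_def C_def)
    ultimately have "W0 + (p+1)*t*C \<le> (LINT r:{0<..<1}|lborel. Vw R \<alpha> r * \<bar>v t r\<bar> powr (p+1) * r^(N-1))" by simp
    then have "\<sigma> * (W0 + (p+1)*t*C) \<le> wnorm N R \<alpha> p (v t)"
      unfolding wnorm_def \<sigma>_def[symmetric] using \<sigma> by (intro mult_left_mono) auto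
    then show ?thesis using W0 by (simp add: algebra_simps)
  qed

  have admv: "rad_adm N R \<alpha> p (v t)" for t
    unfolding rad_adm_def
  proof (intro conjI)
    show "\<forall>r\<in>{0<..1}. v t differentiable (at r within {0<..1})"
      using hv by (blast intro: differentiableI_vector)
    have "continuous_on {0<..1} (\<lambda>r. ud r + t * phd r)"
      by (intro continuous_intros cud continuous_on_subset[OF phc]) auto
    then show "continuous_on {0<..1} (rderiv (v t))"
    proof -
      have "continuous_on {0<..1} (rderiv (v t)) = continuous_on {0<..1} (\<lambda>r. ud r + t * phd r)"
        by (rule continuous_on_cong[OF refl]) (rule rdv)
      with \<open>continuous_on {0<..1} (\<lambda>r. ud r + t * phd r)\<close> show ?thesis by simp
    qed
    show "v t 1 = 0" using u1 ph1 by (simp add: v_def)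
    show "set_integrable lborel {0<..<1} (\<lambda>r. (rderiv (v t) r)\<^sup>2 * r ^ (N - 1))" by (rule Id)
    show "set_integrable lborel {0<..<1} (\<lambda>r. Vw R \<alpha> r * \<bar>v t r\<bar> powr (p + 1) * r ^ (N - 1))" by (rule Iv)
  qed
  define h where "h = u (1/2)"
  have h: "h > 0" using upos by (simp add: h_def)
  define q where "q = 2/(p+1)"
  have q: "q > 0" using p by (simp add: q_def)
  define X where "X = {v. rad_adm N R \<alpha> p v \<and> (\<exists>r\<in>{0<..<1}. v r \<noteq> (0::real))}"
  have key: "S * (wnorm N R \<alpha> p (v t)) powr q \<le> dirichlet N (v t)" if t: "\<bar>t\<bar> < h" for t
  proof -
    have "v t (1/2) \<noteq> 0"
    proof -
      have "\<bar>t * ph (1/2)\<bar> \<le> \<bar>t\<bar>" using phb[of "1/2"] by (auto simp: abs_mult intro: mult_left_le)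
      then show ?thesis using t unfolding v_def h_def by linarith
    qed
    then have mem: "v t \<in> X" unfolding X_def using admv[of t] by force
    have bdd: "bdd_below ((\<lambda>v. dirichlet N v / wnorm N R \<alpha> p v powr (2 / (p + 1))) ` X)"
      by (rule bdd_belowI2[where m=0]) (intro divide_nonneg_nonneg Dnn, simp)
    have SQ: "S \<le> dirichlet N (v t) / wnorm N R \<alpha> p (v t) powr q"
      unfolding S_def S_rad_def q_def X_def[symmetric] by (rule cINF_lower[OF bdd mem])
    show ?thesis
    proof (cases "wnorm N R \<alpha> p (v t) powr q = 0")
      case True then show ?thesis using Dnn by simp
    next
      case False
      then have "wnorm N R \<alpha> p (v t) powr q > 0" by (simp add: less_le)
      then show ?thesis using SQ by (simp add: pos_le_divide_eq)
    qed
  qed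

  define c where "c = (p+1)*\<sigma>*C"
  define d where "d = min h (1/(\<bar>c\<bar>+1))"
  have d: "d > 0" using h by (simp add: d_def)
  define g where "g t = \<sigma>*(D0 + 2*t*A + t^2*B) - S * (1 + c*t) powr q" for t
  have g0: "g 0 = 0" using dD0 dS by (simp add: g_def S_def)
  have gmin: "\<forall>y. \<bar>0 - y\<bar> < d \<longrightarrow> g 0 \<le> g y"
  proof (intro allI impI)
    fix y :: real assume y: "\<bar>0 - y\<bar> < d"
    then have yh: "\<bar>y\<bar> < h" by (simp add: d_def)
    have "\<bar>c*y\<bar> < 1"
    proof -
      have "\<bar>y\<bar> < 1/(\<bar>c\<bar>+1)" using y by (simp add: d_def)
      then have "\<bar>y\<bar> * (\<bar>c\<bar>+1) < 1" by (simp add: pos_less_divide_eq)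
      then show ?thesis by (simp add: abs_mult algebra_simps)
    qed
    then have pos: "0 \<le> 1 + c*y" by linarith
    have "1 + c*y \<le> wnorm N R \<alpha> p (v y)" using Wv[of y] by (simp add: c_def algebra_simps)
    then have "(1 + c*y) powr q \<le> wnorm N R \<alpha> p (v y) powr q" using pos q by (intro powr_mono2) auto
    then have "S * (1 + c*y) powr q \<le> S * wnorm N R \<alpha> p (v y) powr q" using S0 by (rule mult_left_mono)
    also have "\<dots> \<le> dirichlet N (v y)" by (rule key[OF yh])
    finally show "g 0 \<le> g y" using Dv[of y] g0 by (simp add: g_def)
  qed
  have gd: "(g has_real_derivative \<sigma>*(2*A) - S*(q*c)) (at 0)"
  proof -
    have p1: "((\<lambda>t. \<sigma>*(D0 + 2*t*A + t^2*B)) has_real_derivative \<sigma>*(2*A)) (at 0)"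
      by (auto intro!: derivative_eq_intros)
    have inner: "((\<lambda>t. 1 + c*t) has_real_derivative c) (at 0)"
      by (auto intro!: derivative_eq_intros)
    have "((\<lambda>t. (1 + c*t) powr q) has_real_derivative (q * (1 + c*0) powr (q - 1)) * c) (at 0)"
      by (rule DERIV_chain2[OF has_real_derivative_powr inner]) simp
    then have p2: "((\<lambda>t. (1 + c*t) powr q) has_real_derivative q*c) (at 0)" by simp
    show ?thesis unfolding g_def[abs_def] by (intro DERIV_diff p1 DERIV_cmult p2)
  qed
  have "\<sigma>*(2*A) - S*(q*c) = 0" by (rule DERIV_local_min[OF gd d gmin])
  moreover have "q*c = 2*\<sigma>*C" using p by (simp add: q_def c_def)
  ultimately have "\<sigma>*(2*A) = \<sigma>*(2*(S*C))" by (simp add: algebra_simps)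
  then have "A = S*C" using \<sigma> by simp
  then show "(LINT r:{0<..<1}|lborel. rderiv u r * phd r * r^(N-1)) =
       S_rad N R \<alpha> p * (LINT r:{0<..<1}|lborel. Vw R \<alpha> r * u r powr p * ph r * r^(N-1))"
    by (simp add: A_def C_def S_def ud_def)
qed


lemma deriv_bound:
  fixes N :: nat and p R \<alpha> :: real and u :: "real \<Rightarrow> real"
  assumes N: "N \<ge> 2" and p: "p > 1" and R: "0 \<le> R" "R \<le> 1" and al: "\<alpha> > 0"
    and adm: "rad_adm N R \<alpha> p u" and upos: "\<forall>r\<in>{0<..<1}. u r > 0"
    and wn: "wnorm N R \<alpha> p u = 1" and dS: "dirichlet N u = S_rad N R \<alpha> p"
  shows "\<bar>rderiv u 1\<bar> \<le> S_rad N R \<alpha> p * (LINT r:{0<..<1}|lborel. Vw R \<alpha> r * u r powr p * r^(N-1))"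
proof (rule field_le_epsilon)
  fix \<delta> :: real assume \<delta>: "\<delta> > 0"
  define S where "S = S_rad N R \<alpha> p"
  define M where "M = (LINT r:{0<..<1}|lborel. Vw R \<alpha> r * u r powr p * r^(N-1))"
  define g where "g r = rderiv u r * r^(N-1)" for r :: real
  have S0: "S \<ge> 0"
  proof -
    have "dirichlet N u \<ge> 0"
      unfolding dirichlet_def using sphere_pos[of N] N by (intro mult_nonneg_nonneg set_nonneg) auto
    then show ?thesis using dS by (simp add: S_def)
  qed
  have cud: "continuous_on {0<..1} (rderiv u)" using adm by (simp add: rad_adm_def)
  have cg: "continuous_on {0<..1} g" unfolding g_def[abs_def] by (intro continuous_intros cud)
  obtain e where e: "e > 0" and ee: "\<And>r. r \<in> {0<..1} \<Longrightarrow> dist r 1 < e \<Longrightarrow> dist (g r) (g 1) < \<delta>"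
    using cg \<delta> unfolding continuous_on_iff by (metis greaterThanAtMost_iff order_refl zero_less_one)
  define a where "a = max (1/2) (1 - e/2)"
  have a: "0 \<le> a" "a < 1" using e by (auto simp: a_def)
  have g1: "g 1 = rderiv u 1" by (simp add: g_def)
  note EL' = EL[OF N p R al adm upos wn dS phi_deriv[OF a(2)] phid_cont[OF a(2)] phi_props(1)[OF a]]
  have phb: "0 \<le> phi a r \<and> phi a r \<le> 1" if "r \<in> {0..1}" for r using phi_props(3)[OF a] that by auto
  note EL2 = EL'[OF phb]
  define A where "A = (LINT r:{0<..<1}|lborel. rderiv u r * phid a r * r^(N-1))"
  define C where "C = (LINT r:{0<..<1}|lborel. Vw R \<alpha> r * u r powr p * phi a r * r^(N-1))"
  have AC: "A = S * C" using EL2(3) by (simp add: A_def C_def S_def)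
  have IA: "set_integrable lborel {0<..<1} (\<lambda>r. rderiv u r * phid a r * r^(N-1))" by (rule EL2(1))
  have IC: "set_integrable lborel {0<..<1} (\<lambda>r. Vw R \<alpha> r * u r powr p * phi a r * r^(N-1))" by (rule EL2(2))
  have IM: "set_integrable lborel {0<..<1} (\<lambda>r. Vw R \<alpha> r * u r powr p * r^(N-1))" by (rule EL2(4))
  have Ip: "set_integrable lborel {0<..<1} (\<lambda>r. k * phid a r)" for k
    using phid_int(1)[OF a] by (rule set_integrable_mult_right)
  have Ipv: "(LINT r:{0<..<1}|lborel. k * phid a r) = -k" for k
    using phid_int(2)[OF a] by simp
  have pw: "g 1 - \<delta> \<le> g r \<and> g r \<le> g 1 + \<delta>" if r: "r \<in> {0<..<1}" "a < r" for r
  proof -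
    have "dist r 1 < e" using r by (auto simp: a_def dist_real_def)
    then have "dist (g r) (g 1) < \<delta>" using ee[of r] r by auto
    then show ?thesis by (auto simp: dist_real_def)
  qed
  have lo: "(g 1 + \<delta>) * phid a r \<le> rderiv u r * phid a r * r^(N-1)" if r: "r \<in> {0<..<1}" for r
  proof (cases "r \<le> a")
    case True then show ?thesis using phi_props(5)[OF a] by simp
  next
    case False
    have "phid a r \<le> 0" using phi_props(4)[OF a, of r] r by auto
    then have "(g 1 + \<delta>) * phid a r \<le> g r * phid a r" using pw[of r] r False by (intro mult_right_mono_neg) auto
    then show ?thesis by (simp add: g_def algebra_simps)
  qed
  have hi: "rderiv u r * phid a r * r^(N-1) \<le> (g 1 - \<delta>) * phid a r" if r: "r \<in> {0<..<1}" for r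
  proof (cases "r \<le> a")
    case True then show ?thesis using phi_props(5)[OF a] by simp
  next
    case False
    have "phid a r \<le> 0" using phi_props(4)[OF a, of r] r by auto
    then have "g r * phid a r \<le> (g 1 - \<delta>) * phid a r" using pw[of r] r False by (intro mult_right_mono_neg) auto
    then show ?thesis by (simp add: g_def algebra_simps)
  qed
  have "-(g 1 + \<delta>) \<le> A"
    using set_integral_mono[OF Ip IA lo] Ipv by (simp add: A_def)
  moreover have "A \<le> -(g 1 - \<delta>)"
    using set_integral_mono[OF IA Ip hi] Ipv by (simp add: A_def)
  moreover have "0 \<le> C" unfolding C_def
  proof (rule set_nonneg)
    fix r :: real assume r: "r \<in> {0<..<1}"
    show "0 \<le> Vw R \<alpha> r * u r powr p * phi a r * r^(N-1)"
      using Vw_bounds[OF R al r] phb[of r] r by simp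
  qed
  moreover have "C \<le> M" unfolding C_def M_def
  proof (rule set_integral_mono[OF IC IM])
    fix r :: real assume r: "r \<in> {0<..<1}"
    have "0 \<le> Vw R \<alpha> r * u r powr p * r^(N-1)" using Vw_bounds[OF R al r] r by simp
    then show "Vw R \<alpha> r * u r powr p * phi a r * r^(N-1) \<le> Vw R \<alpha> r * u r powr p * r^(N-1)"
      using phb[of r] r mult_left_le[of "phi a r" "Vw R \<alpha> r * u r powr p * r^(N-1)"] by (simp add: algebra_simps)
  qed
  ultimately have "\<bar>g 1\<bar> \<le> S * M + \<delta>" using AC S0 mult_left_mono[OF \<open>C \<le> M\<close> S0] mult_nonneg_nonneg[OF S0 \<open>0 \<le> C\<close>]
    by linarith
  then show "\<bar>rderiv u 1\<bar> \<le> S_rad N R \<alpha> p * (LINT r:{0<..<1}|lborel. Vw R \<alpha> r * u r powr p * r^(N-1)) + \<delta>"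
    by (simp add: g1 S_def M_def)
qed


lemma M_bound:
  fixes N :: nat and p R \<alpha> :: real and u :: "real \<Rightarrow> real"
  assumes N: "N \<ge> 2" and p: "p > 1" and R: "0 \<le> R" "R \<le> 1" and al: "\<alpha> > 0"
    and adm: "rad_adm N R \<alpha> p u" and upos: "\<forall>r\<in>{0<..<1}. u r > 0"
    and wn: "wnorm N R \<alpha> p u = 1" and dS: "dirichlet N u = S_rad N R \<alpha> p"
  shows "(LINT r:{0<..<1}|lborel. Vw R \<alpha> r * u r powr p * r^(N-1))
      \<le> (1/(\<alpha>+1)) powr (1/(p+1)) * sphere_area N powr (-p/(p+1))"
proof -
  define \<sigma> where "\<sigma> = sphere_area N"
  have \<sigma>: "\<sigma> > 0" unfolding \<sigma>_def using N by (intro sphere_pos) auto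
  define J where "J = 1/(\<alpha>+1)"
  have J: "J > 0" using al by (simp add: J_def)
  define T where "T = J powr (1/(p+1)) * \<sigma> powr (-p/(p+1))"
  define l where "l = J powr (1/(p+1)) * \<sigma> powr (1/(p+1))"
  have l: "l > 0" using J \<sigma> by (simp add: l_def)
  have lT1: "l / \<sigma> = T"
  proof -
    have "\<sigma> powr (1/(p+1)) / \<sigma> = \<sigma> powr (-p/(p+1))"
    proof -
      have "\<sigma> powr (1/(p+1)) = \<sigma> powr (-p/(p+1)) * \<sigma> powr 1" 
        unfolding powr_add[symmetric] using p by (simp add: field_simps)
      then show ?thesis using \<sigma> by simp
    qed
    moreover have "l/\<sigma> = J powr (1/(p+1)) * (\<sigma> powr (1/(p+1)) / \<sigma>)" unfolding l_def by simp
    ultimately show ?thesis unfolding T_def by simp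
  qed
  have lT2: "l powr (-p) * J = T"
  proof -
    have "l powr (-p) = J powr (-p/(p+1)) * \<sigma> powr (-p/(p+1))"
      unfolding l_def using J \<sigma> by (simp add: powr_mult powr_powr)
    moreover have "J powr (-p/(p+1)) * J = J powr (1/(p+1))"
    proof -
      have "J powr (-p/(p+1)) * J powr 1 = J powr (1/(p+1))"
        unfolding powr_add[symmetric] using p by (simp add: field_simps)
      then show ?thesis using J by simp
    qed
    ultimately show ?thesis unfolding T_def by (simp add: algebra_simps)
  qed
  have adm2: "set_integrable lborel {0<..<1} (\<lambda>r. Vw R \<alpha> r * \<bar>u r\<bar> powr (p + 1) * r ^ (N - 1))"
    using adm by (simp add: rad_adm_def)
  have a: "0 \<le> (1/2::real)" "(1/2::real) < 1" by auto
  have phb: "0 \<le> phi (1/2) r \<and> phi (1/2) r \<le> 1" if "r \<in> {0..1}" for r using phi_props(3)[OF a] that by auto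
  have IM: "set_integrable lborel {0<..<1} (\<lambda>r. Vw R \<alpha> r * u r powr p * r^(N-1))"
    by (rule EL(4)[OF N p R al adm upos wn dS phi_deriv[OF a(2)] phid_cont[OF a(2)] phi_props(1)[OF a] phb])
  have IV: "set_integrable lborel {0<..<1} (\<lambda>r. Vw R \<alpha> r * r^(N-1))" by (rule Vint(1)[OF R al])
  have IR: "set_integrable lborel {0<..<1} (\<lambda>r. (p/(p+1)*l) * (Vw R \<alpha> r * \<bar>u r\<bar> powr (p + 1) * r ^ (N - 1)) + (l powr (-p)/(p+1)) * (Vw R \<alpha> r * r^(N-1)))"
    by (rule set_integral_add(1)) (rule set_integrable_mult_right, rule adm2, rule set_integrable_mult_right, rule IV)
  have "(LINT r:{0<..<1}|lborel. Vw R \<alpha> r * u r powr p * r^(N-1))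
      \<le> (LINT r:{0<..<1}|lborel. (p/(p+1)*l) * (Vw R \<alpha> r * \<bar>u r\<bar> powr (p + 1) * r ^ (N - 1)) + (l powr (-p)/(p+1)) * (Vw R \<alpha> r * r^(N-1)))"
  proof (rule set_integral_mono[OF IM IR])
    fix r :: real assume r: "r \<in> {0<..<1}"
    have ur: "u r > 0" using upos r by auto
    have y: "u r powr p \<le> p/(p+1) * l * u r powr (p+1) + l powr (-p) / (p+1)"
      by (rule young_pt) (use ur p l in auto)
    have "Vw R \<alpha> r * r^(N-1) \<ge> 0" using Vw_bounds[OF R al r] r by simp
    from mult_left_mono[OF y this]
    show "Vw R \<alpha> r * u r powr p * r^(N-1) \<le> (p/(p+1)*l) * (Vw R \<alpha> r * \<bar>u r\<bar> powr (p + 1) * r ^ (N - 1)) + (l powr (-p)/(p+1)) * (Vw R \<alpha> r * r^(N-1))"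
      using ur by (simp add: algebra_simps)
  qed
  also have "\<dots> = (p/(p+1)*l) * (1/\<sigma>) + (l powr (-p)/(p+1)) * (LINT r:{0<..<1}|lborel. Vw R \<alpha> r * r^(N-1))"
  proof -
    have "(LINT r:{0<..<1}|lborel. Vw R \<alpha> r * \<bar>u r\<bar> powr (p + 1) * r ^ (N - 1)) = 1/\<sigma>"
      using wn \<sigma> by (simp add: wnorm_def \<sigma>_def field_simps)
    then show ?thesis using adm2 IV by (simp add: set_integral_add(2))
  qed
  also have "\<dots> \<le> (p/(p+1)*l) * (1/\<sigma>) + (l powr (-p)/(p+1)) * J"
    using Vint(2)[OF R al, of "N-1"] p l by (intro add_left_mono mult_left_mono) (auto simp: J_def)
  also have "\<dots> = p/(p+1) * (l/\<sigma>) + (l powr (-p) * J)/(p+1)" by simp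
  also have "\<dots> = T" unfolding lT1 lT2
  proof -
    have "p/(p+1) * T + T/(p+1) = ((p+1)*T)/(p+1)" by (simp add: add_divide_distrib algebra_simps)
    also have "\<dots> = T" using p by simp
    finally show "p/(p+1) * T + T/(p+1) = T" .
  qed
  finally show ?thesis by (simp add: T_def J_def \<sigma>_def)
qed



lemma scale_facts:
  fixes N :: nat and p R \<alpha> c :: real and v :: "real \<Rightarrow> real"
  assumes adm: "rad_adm N R \<alpha> p v" and c: "c \<ge> 0"
  shows "rderiv (\<lambda>r. c * v r) 1 = c * rderiv v 1"
    "dirichlet N (\<lambda>r. c * v r) = c^2 * dirichlet N v"
    "wnorm N R \<alpha> p (\<lambda>r. c * v r) = c powr (p+1) * wnorm N R \<alpha> p v"
proof -
  have diff: "\<forall>r\<in>{0<..1}. v differentiable (at r within {0<..1})" using adm by (simp add: rad_adm_def)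
  have rd: "rderiv (\<lambda>r. c * v r) r = c * rderiv v r" if r: "r \<in> {0<..1}" for r :: real
  proof -
    have "(v has_vector_derivative rderiv v r) (at r within {0<..1})"
      using diff r unfolding rderiv_def by (simp add: vector_derivative_works)
    then have h: "((\<lambda>r. c * v r) has_vector_derivative c * rderiv v r) (at r within {0<..1})"
      by (rule has_vector_derivative_mult_right)
    have "r islimpt {0<..1::real}" using r by simp
    then have nb: "at r within {0<..1} \<noteq> bot" using trivial_limit_within[of r "{0<..1::real}"] by (simp add: trivial_limit_def)
    show ?thesis using vector_derivative_within[OF nb h] by (simp add: rderiv_def)
  qed
  show "rderiv (\<lambda>r. c * v r) 1 = c * rderiv v 1" by (rule rd) simp
  have "(LINT r:{0<..<1}|lborel. (rderiv (\<lambda>r. c * v r) r)\<^sup>2 * r ^ (N - 1)) =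
        (LINT r:{0<..<1}|lborel. c^2 * ((rderiv v r)\<^sup>2 * r ^ (N - 1)))"
    by (rule set_lebesgue_integral_cong) (auto simp: rd power_mult_distrib)
  then show "dirichlet N (\<lambda>r. c * v r) = c^2 * dirichlet N v"
    by (simp add: dirichlet_def)
  have "(LINT r:{0<..<1}|lborel. Vw R \<alpha> r * \<bar>c * v r\<bar> powr (p + 1) * r ^ (N - 1)) =
        (LINT r:{0<..<1}|lborel. c powr (p+1) * (Vw R \<alpha> r * \<bar>v r\<bar> powr (p + 1) * r ^ (N - 1)))"
    by (rule set_lebesgue_integral_cong) (use c in \<open>auto simp: abs_mult powr_mult\<close>)
  then show "wnorm N R \<alpha> p (\<lambda>r. c * v r) = c powr (p+1) * wnorm N R \<alpha> p v"
    by (simp add: wnorm_def)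
qed


theorem mainTheorem9:
  fixes N :: nat and p R \<alpha> :: real and ustar :: "real \<Rightarrow> real"
  assumes "N \<ge> 2"
    and "p > 1"
    and "N \<ge> 3 \<longrightarrow> p < (real N + 2) / (real N - 2)"
    and "0 \<le> R" and "R \<le> 1"
    and "\<alpha> > 0"
    and "rad_adm N R \<alpha> p ustar"
    and "\<forall>r\<in>{0<..<1}. ustar r > 0"
    and "wnorm N R \<alpha> p ustar = 1"
    and "dirichlet N ustar = S_rad N R \<alpha> p"
  shows "let u = (\<lambda>r. S_rad N R \<alpha> p powr (1 / (p - 1)) * ustar r);
             C = energy N R \<alpha> p u
         in sphere_area N * (rderiv u 1)\<^sup>2
            \<le> Kstar N p * C powr (2 * p / (p + 1)) / (\<alpha> + 1) powr (2 / (p + 1))"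
proof -
  note N = assms(1) and p = assms(2) and R = assms(4,5) and al = assms(6) and adm = assms(7)
    and upos = assms(8) and wn = assms(9) and dS = assms(10)
  define S where "S = S_rad N R \<alpha> p"
  define \<sigma> where "\<sigma> = sphere_area N"
  have \<sigma>: "\<sigma> > 0" unfolding \<sigma>_def using N by (intro sphere_pos) auto
  define c where "c = S powr (1/(p-1))"
  have S0: "S \<ge> 0"
  proof -
    have "dirichlet N ustar \<ge> 0"
      unfolding dirichlet_def using sphere_pos[of N] N by (intro mult_nonneg_nonneg set_nonneg) auto
    then show ?thesis using dS by (simp add: S_def)
  qed
  have c0: "c \<ge> 0" by (simp add: c_def)
  note sc = scale_facts[OF adm c0]
  define d1 where "d1 = rderiv ustar 1"
  define E where "E = energy N R \<alpha> p (\<lambda>r. c * ustar r)"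
  have E: "E = c^2 * S / 2 - c powr (p+1) / (p+1)"
    unfolding E_def energy_def sc using dS wn by (simp add: S_def)
  define K where "K = Kstar N p * E powr (2 * p / (p + 1)) / (\<alpha> + 1) powr (2 / (p + 1))"
  have goal: "\<sigma> * (c * d1)\<^sup>2 \<le> K"
  proof (cases "S = 0")
    case True
    then have "c = 0" by (simp add: c_def)
    moreover have "K \<ge> 0" unfolding K_def Kstar_def by simp
    ultimately show ?thesis by simp
  next
    case False
    then have Sp: "S > 0" using S0 by simp
    have cp: "c > 0" using Sp by (simp add: c_def)
    define T where "T = (1/(\<alpha>+1)) powr (1/(p+1)) * \<sigma> powr (-p/(p+1))"
    have T: "T > 0" using \<sigma> al by (simp add: T_def)
    have db: "\<bar>d1\<bar> \<le> S * T"
    proof -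
      have "\<bar>d1\<bar> \<le> S * (LINT r:{0<..<1}|lborel. Vw R \<alpha> r * ustar r powr p * r^(N-1))"
        using deriv_bound[OF N p R al adm upos wn dS] by (simp add: d1_def S_def)
      also have "\<dots> \<le> S * T"
        using M_bound[OF N p R al adm upos wn dS] S0 by (intro mult_left_mono) (auto simp: T_def \<sigma>_def)
      finally show ?thesis .
    qed
    have "\<sigma> * (c * d1)\<^sup>2 = \<sigma> * c^2 * d1^2" by (simp add: power_mult_distrib)
    also have "\<dots> \<le> \<sigma> * c^2 * (S*T)^2"
    proof -
      have "d1^2 \<le> (S*T)^2" using db by (metis abs_le_square_iff abs_of_nonneg Sp T less_imp_le mult_nonneg_nonneg)
      then show ?thesis using \<sigma> by (intro mult_left_mono) auto
    qed
    also have "\<dots> = K"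
    proof -
      define k where "k = 2 * (p + 1) / (p - 1)"
      have k: "k > 0" using p by (simp add: k_def)
      have lc: "ln c = ln S / (p-1)" unfolding c_def ln_powr by simp
      have Ep: "E = exp ((p+1)/(p-1) * ln S) / k"
      proof -
        have "c^2 * S = exp ((p+1)/(p-1) * ln S)"
        proof -
          have "c^2 * S = exp (ln (c^2 * S))" using cp Sp by simp
          also have "ln (c^2 * S) = 2 * ln c + ln S" using cp Sp by (simp add: ln_mult ln_realpow)
          finally have "c^2 * S = exp (2 * ln c + ln S)" .
          also have "2 * ln c + ln S = (p+1)/(p-1) * ln S" using p unfolding lc by (simp add: field_simps)
          finally show ?thesis .
        qed
        moreover have "c powr (p+1) = exp ((p+1)/(p-1) * ln S)"
        proof -
          have "c powr (p+1) = exp ((p+1) * ln c)" using cp by (simp add: powr_def)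
          also have "(p+1) * ln c = (p+1)/(p-1) * ln S" unfolding lc by simp
          finally show ?thesis .
        qed
        ultimately have "E = exp ((p+1)/(p-1) * ln S) * (1/2 - 1/(p+1))" unfolding E by (simp add: algebra_simps)
        moreover have "1/2 - 1/(p+1) = 1/k" using p by (simp add: k_def field_simps)
        ultimately show ?thesis by simp
      qed
      have Epos: "E > 0" using Ep k by simp
      have lhs_pos: "\<sigma> * c^2 * (S*T)^2 > 0" using \<sigma> cp Sp T by simp
      have K_pos: "K > 0" unfolding K_def Kstar_def using \<sigma> Epos p al by (simp add: \<sigma>_def[symmetric])
      have "ln (\<sigma> * c^2 * (S*T)^2) = ln K"
      proof -
        have "ln (\<sigma> * c^2 * (S*T)^2) = ln \<sigma> + 2 * ln c + 2 * ln S + 2 * ln T"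
          using \<sigma> cp Sp T by (simp add: ln_mult power2_eq_square)
        also have "ln T = - ln (\<alpha>+1) / (p+1) - p/(p+1) * ln \<sigma>"
          unfolding T_def using \<sigma> al by (simp add: ln_mult ln_div)
        finally have L: "ln (\<sigma> * c^2 * (S*T)^2) = ln \<sigma> + 2 * (ln S / (p-1)) + 2 * ln S + 2 * (- ln (\<alpha>+1) / (p+1) - p/(p+1) * ln \<sigma>)"
          unfolding lc .
        have Kk: "Kstar N p = \<sigma> powr ((1-p)/(p+1)) * k powr (2*p/(p+1))"
          by (simp add: Kstar_def \<sigma>_def k_def)
        have lnE: "ln E = (p+1)/(p-1) * ln S - ln k" using Ep k by (simp add: ln_div)
        have "ln K = (1-p)/(p+1) * ln \<sigma> + 2*p/(p+1) * ln k + 2*p/(p+1) * ln E - 2/(p+1) * ln (\<alpha>+1)"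
          unfolding K_def Kk using \<sigma> k al Epos by (simp add: ln_mult ln_div)
        then have "ln K = (1-p)/(p+1) * ln \<sigma> + 2*p/(p+1) * ln k + 2*p/(p+1) * ((p+1)/(p-1) * ln S - ln k) - 2/(p+1) * ln (\<alpha>+1)"
          unfolding lnE .
        moreover have ar: "x + 2 * (y / (p-1)) + 2 * y + 2 * (- z / (p+1) - p/(p+1) * x) =
           (1-p)/(p+1) * x + 2*p/(p+1) * w + 2*p/(p+1) * ((p+1)/(p-1) * y - w) - 2/(p+1) * z" for x y z w :: real
        proof -
          have a: "p - 1 \<noteq> 0" "p + 1 \<noteq> 0" using p by auto
          have h1: "(p-1) * inverse (p-1) = 1" "(p+1) * inverse (p+1) = 1" using a by auto
          show ?thesis unfolding divide_inverse using h1 by algebra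
        qed
        ultimately show ?thesis using L by (metis ar)
      qed
      then show ?thesis using lhs_pos K_pos by simp
    qed
    finally show ?thesis .
  qed
  show ?thesis unfolding Let_def S_def[symmetric] c_def[symmetric] using goal
    by (simp add: sc(1) d1_def K_def E_def \<sigma>_def)
qed


end
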